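(* Every tOR net is sub-sound.
   Context: Petri nets and markings. A Petri net is a triple $(P,T,F)$ with $P$ a finite set of places, $T$ a finite set of transitions, $P\cap T=\emptyset$, and $F\subseteq (P\times T)\cup(T\times P)$. For a node $x$, $\bullet x=\{y\mid (y,x)\in F\}$, $x\bullet=\{y\mid (x,y)\in F\}$. A marking is a multiset over $P$ (a function $P\to\mathbb N$); sets of places are identified with bags of multiplicity one, $+,-,\le$ are pointwise, and $k.m$ is the sum of $k$ copies of $m$. Transition $t$ is enabled at $m$ iff $\bullet t\le m$, firing gives $m-\bullet t+t\bullet$, and $m\xrightarrow{*}m'$ denotes reachability by a finite (possibly empty) firing sequence. Workflow nets. A pWF net is $(P,T,F,I,O)$ with $(P,T,F)$ a Petri net, $I,O\subseteq P$ non-empty, every node reachable by a directed path from some node of $I$, and some node of $O$ reachable from every node. A tWF net is the same with $I,O$ non-empty subsets of $T$. Input nodes may have incoming edges and output nodes outgoing edges. The place-completion $\mathrm{pc}(N)$ of a tWF net $N=(P,T,F,I,O)$ is obtained by adding two fresh places $p_i,p_o$ with edges $(p_i,t)$ for all $t\in I$ and $(t,p_o)$ for all $t\in O$, and taking input set $\{p_i\}$ and output set $\{p_o\}$. OR nets. An OR net is a (possibly cyclic) WF net such that for every transition $t$: (1) either $t\in I$ and $|\bullet t|=0$, or $t\notin I$ and $|\bullet t|=1$; and (2) either $t\in O$ and $|t\bullet|=0$, or $t\notin O$ and $|t\bullet|=1$. A tOR net is an OR net that is a tWF net. Sub-soundness. A pWF net is sub-sound if for all integers $k\ge k'\ge 0$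 and every marking $m'$: if $k.I\xrightarrow{*}m'+k'.O$ then $m'\xrightarrow{*}(k-k').O$. A tWF net is sub-sound iff its place-completion is. *)

theory Defs
  imports Main "HOL-Library.Multiset"
begin

text \<open>A Petri net (P,T,F) with places of type 'p and transitions of type 't.
  Since the node types are separate, P and T are disjoint; F is split into
  the place-to-transition part (pre) and the transition-to-place part (post),
  so F is a subset of (P x T) u (T x P) by construction.\<close>

record ('p, 't) pnet =
  places :: "'p set"
  trans  :: "'t set"
  pre    :: "('p \<times> 't) set"
  post   :: "('t \<times> 'p) set"

definition petri_net :: "('p, 't) pnet \<Rightarrow> bool" where
  "petri_net N \<longleftrightarrow> finite (places N) \<and> finite (trans N) \<and>
     pre N \<subseteq> places N \<times> trans N \<and> post N \<subseteq> trans N \<times> places N"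

definition preset :: "('p, 't) pnet \<Rightarrow> 't \<Rightarrow> 'p set" where
  "preset N t = {p. (p, t) \<in> pre N}"

definition postset :: "('p, 't) pnet \<Rightarrow> 't \<Rightarrow> 'p set" where
  "postset N t = {p. (t, p) \<in> post N}"

definition fire :: "('p, 't) pnet \<Rightarrow> 'p multiset \<Rightarrow> 't \<Rightarrow> 'p multiset \<Rightarrow> bool" where
  "fire N m t m' \<longleftrightarrow> t \<in> trans N \<and> mset_set (preset N t) \<subseteq># m \<and>
     m' = m - mset_set (preset N t) + mset_set (postset N t)"

definition reach :: "('p, 't) pnet \<Rightarrow> 'p multiset \<Rightarrow> 'p multiset \<Rightarrow> bool" where
  "reach N = (\<lambda>m m'. \<exists>t. fire N m t m')\<^sup>*\<^sup>*"

definition nodes :: "('p, 't) pnet \<Rightarrow> ('p + 't) set" where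
  "nodes N = Inl ` places N \<union> Inr ` trans N"

definition flow :: "('p, 't) pnet \<Rightarrow> (('p + 't) \<times> ('p + 't)) set" where
  "flow N = {(Inl p, Inr t) | p t. (p, t) \<in> pre N} \<union> {(Inr t, Inl p) | t p. (t, p) \<in> post N}"

definition wf_connected :: "('p, 't) pnet \<Rightarrow> ('p + 't) set \<Rightarrow> ('p + 't) set \<Rightarrow> bool" where
  "wf_connected N Is Os \<longleftrightarrow>
     (\<forall>x \<in> nodes N. (\<exists>i \<in> Is. (i, x) \<in> (flow N)\<^sup>*) \<and> (\<exists>q \<in> Os. (x, q) \<in> (flow N)\<^sup>*))"

definition pWF :: "('p, 't) pnet \<Rightarrow> 'p set \<Rightarrow> 'p set \<Rightarrow> bool" where
  "pWF N Inp Out \<longleftrightarrow> petri_net N \<and> Inp \<subseteq> places N \<and> Out \<subseteq> places N \<and> Inp \<noteq> {} \<and> Out \<noteq> {} \<and>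
     wf_connected N (Inl ` Inp) (Inl ` Out)"

definition tWF :: "('p, 't) pnet \<Rightarrow> 't set \<Rightarrow> 't set \<Rightarrow> bool" where
  "tWF N Inp Out \<longleftrightarrow> petri_net N \<and> Inp \<subseteq> trans N \<and> Out \<subseteq> trans N \<and> Inp \<noteq> {} \<and> Out \<noteq> {} \<and>
     wf_connected N (Inr ` Inp) (Inr ` Out)"

definition tOR :: "('p, 't) pnet \<Rightarrow> 't set \<Rightarrow> 't set \<Rightarrow> bool" where
  "tOR N Inp Out \<longleftrightarrow> tWF N Inp Out \<and>
     (\<forall>t \<in> trans N.
        ((t \<in> Inp \<and> card (preset N t) = 0) \<or> (t \<notin> Inp \<and> card (preset N t) = 1)) \<and>
        ((t \<in> Out \<and> card (postset N t) = 0) \<or> (t \<notin> Out \<and> card (postset N t) = 1)))"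

definition sub_sound_p :: "('p, 't) pnet \<Rightarrow> 'p set \<Rightarrow> 'p set \<Rightarrow> bool" where
  "sub_sound_p N Inp Out \<longleftrightarrow>
     (\<forall>k k' m'. k' \<le> k \<longrightarrow> set_mset m' \<subseteq> places N \<longrightarrow>
        reach N (repeat_mset k (mset_set Inp)) (m' + repeat_mset k' (mset_set Out)) \<longrightarrow>
        reach N m' (repeat_mset (k - k') (mset_set Out)))"

datatype 'p cplace = Orig 'p | PIn | POut

definition pc :: "('p, 't) pnet \<Rightarrow> 't set \<Rightarrow> 't set \<Rightarrow> ('p cplace, 't) pnet" where
  "pc N Inp Out = \<lparr> places = Orig ` places N \<union> {PIn, POut},
               trans = trans N,
               pre = {(Orig p, t) | p t. (p, t) \<in> pre N} \<union> {(PIn, t) | t. t \<in> Inp},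
               post = {(t, Orig p) | t p. (t, p) \<in> post N} \<union> {(t, POut) | t. t \<in> Out} \<rparr>"

definition sub_sound_t :: "('p, 't) pnet \<Rightarrow> 't set \<Rightarrow> 't set \<Rightarrow> bool" where
  "sub_sound_t N Inp Out \<longleftrightarrow> sub_sound_p (pc N Inp Out) {PIn} {POut}"

end

theory Submission
  imports Defs
begin

lemma pc_preset: "preset (pc N Inp Out) t = Orig ` preset N t \<union> (if t \<in> Inp then {PIn} else {})"
  by (auto simp: preset_def pc_def)

lemma pc_postset: "postset (pc N Inp Out) t = Orig ` postset N t \<union> (if t \<in> Out then {POut} else {})"
  by (auto simp: postset_def pc_def)

lemma pc_trans[simp]: "trans (pc N Inp Out) = trans N"
  by (simp add: pc_def)

lemma pc_places: "places (pc N Inp Out) = Orig ` places N \<union> {PIn, POut}"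
  by (simp add: pc_def)

lemma fin_preset: "petri_net N \<Longrightarrow> finite (preset N t)"
  unfolding petri_net_def preset_def
  by (rule finite_subset[of _ "places N"]) auto

lemma fin_postset: "petri_net N \<Longrightarrow> finite (postset N t)"
  unfolding petri_net_def postset_def
  by (rule finite_subset[of _ "places N"]) auto

lemma pre_single:
  assumes "tOR N Inp Out" "t \<in> trans N"
  shows "\<exists>a. preset (pc N Inp Out) t = {a} \<and>
     (t \<in> Inp \<longrightarrow> a = PIn) \<and> (\<forall>p. (p, t) \<in> pre N \<longrightarrow> a = Orig p)"
proof -
  have pn: "petri_net N" using assms(1) by (simp add: tOR_def tWF_def)
  have c: "(t \<in> Inp \<and> card (preset N t) = 0) \<or> (t \<notin> Inp \<and> card (preset N t) = 1)"
    using assms by (simp add: tOR_def)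
  show ?thesis
  proof (cases "t \<in> Inp")
    case True
    with c have "card (preset N t) = 0" by simp
    then have e: "preset N t = {}" using fin_preset[OF pn] by simp
    then have n: "\<forall>p. (p, t) \<notin> pre N" by (auto simp: preset_def)
    have "preset (pc N Inp Out) t = {PIn}" using True e by (simp add: pc_preset)
    then show ?thesis using True n by (intro exI[of _ PIn]) simp
  next
    case False
    with c have "card (preset N t) = Suc 0" by simp
    then obtain p where e: "preset N t = {p}" unfolding card_1_singleton_iff by blast
    then have n: "\<forall>p'. (p', t) \<in> pre N \<longrightarrow> p' = p" by (auto simp: preset_def)
    have "preset (pc N Inp Out) t = {Orig p}" using False e by (simp add: pc_preset)
    then show ?thesis using False n by (intro exI[of _ "Orig p"]) simp
  qed
qed

lemma post_single:
  assumes "tOR N Inp Out" "t \<in> trans N"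
  shows "\<exists>a. postset (pc N Inp Out) t = {a} \<and>
     (t \<in> Out \<longrightarrow> a = POut) \<and> (\<forall>p. (t, p) \<in> post N \<longrightarrow> a = Orig p)"
proof -
  have pn: "petri_net N" using assms(1) by (simp add: tOR_def tWF_def)
  have c: "(t \<in> Out \<and> card (postset N t) = 0) \<or> (t \<notin> Out \<and> card (postset N t) = 1)"
    using assms by (simp add: tOR_def)
  show ?thesis
  proof (cases "t \<in> Out")
    case True
    with c have "card (postset N t) = 0" by simp
    then have e: "postset N t = {}" using fin_postset[OF pn] by simp
    then have n: "\<forall>p. (t, p) \<notin> post N" by (auto simp: postset_def)
    have "postset (pc N Inp Out) t = {POut}" using True e by (simp add: pc_postset)
    then show ?thesis using True n by (intro exI[of _ POut]) simp
  next
    case False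
    with c have "card (postset N t) = Suc 0" by simp
    then obtain p where e: "postset N t = {p}" unfolding card_1_singleton_iff by blast
    then have n: "\<forall>p'. (t, p') \<in> post N \<longrightarrow> p' = p" by (auto simp: postset_def)
    have "postset (pc N Inp Out) t = {Orig p}" using False e by (simp add: pc_postset)
    then show ?thesis using False n by (intro exI[of _ "Orig p"]) simp
  qed
qed

lemma fire_single:
  assumes "t \<in> trans M" "preset M t = {a}" "postset M t = {b}"
  shows "fire M {#a#} t {#b#}"
  using assms by (simp add: fire_def)

lemma fire_size:
  assumes "tOR N Inp Out" "fire (pc N Inp Out) m t m'"
  shows "size m' = size m"
proof -
  have t: "t \<in> trans N" using assms(2) by (simp add: fire_def)
  obtain a where a: "preset (pc N Inp Out) t = {a}" using pre_single[OF assms(1) t] by blast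
  obtain b where b: "postset (pc N Inp Out) t = {b}" using post_single[OF assms(1) t] by blast
  have s: "{#a#} \<subseteq># m" and e: "m' = m - {#a#} + {#b#}" using assms(2) a b by (auto simp: fire_def)
  have "size {#a#} \<le> size m" using s by (rule size_mset_mono)
  then show ?thesis using e size_Diff_submset[OF s] by simp
qed

lemma reach_size:
  assumes "tOR N Inp Out" "reach (pc N Inp Out) m m'"
  shows "size m' = size m"
  using assms(2) unfolding reach_def
  by (induction rule: rtranclp_induct) (auto dest: fire_size[OF assms(1)])

lemma fire_add: "fire M m t m' \<Longrightarrow> fire M (m + c) t (m' + c)"
proof -
  assume f: "fire M m t m'"
  let ?A = "mset_set (preset M t)" and ?B = "mset_set (postset M t)"
  have s: "?A \<subseteq># m" and e: "m' = m - ?A + ?B" and t: "t \<in> trans M" using f by (auto simp: fire_def)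
  have s2: "?A \<subseteq># m + c" using s by (metis mset_subset_eq_add_left subset_mset.order_trans)
  have "c + m - ?A = c + (m - ?A)" using multiset_diff_union_assoc[OF s, of c] .
  then have "m + c - ?A + ?B = m' + c" using e by (simp add: ac_simps)
  then show ?thesis using s2 t by (simp add: fire_def)
qed

lemma reach_add: "reach M m m' \<Longrightarrow> reach M (m + c) (m' + c)"
  unfolding reach_def
proof (induction rule: rtranclp_induct)
  case base then show ?case by simp
next
  case (step y z)
  from step.hyps(2) obtain t where "fire M y t z" by blast
  then have "fire M (y + c) t (z + c)" by (rule fire_add)
  then have "(\<lambda>m m'. \<exists>t. fire M m t m') (y + c) (z + c)" by blast
  with step.IH show ?case by (rule rtranclp.rtrancl_into_rtrancl)
qed

lemma reach_trans: "reach M a b \<Longrightarrow> reach M b c \<Longrightarrow> reach M a c"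
  unfolding reach_def by auto

lemma reach_step: "fire M a t b \<Longrightarrow> reach M b c \<Longrightarrow> reach M a c"
  unfolding reach_def by (rule converse_rtranclp_into_rtranclp) blast+

lemma path_reach:
  assumes or: "tOR N Inp Out" and path: "(x, Inr q) \<in> (flow N)\<^sup>*" and q: "q \<in> Out"
  shows "(case x of Inl p \<Rightarrow> reach (pc N Inp Out) {#Orig p#} {#POut#}
          | Inr t \<Rightarrow> (t \<in> trans N \<longrightarrow> (\<forall>b. postset (pc N Inp Out) t = {b} \<longrightarrow>
                     reach (pc N Inp Out) {#b#} {#POut#})))"
  using path
proof (induction rule: converse_rtrancl_induct)
  case base
  have "q \<in> trans N" using or q by (auto simp: tOR_def tWF_def)
  then obtain a where "postset (pc N Inp Out) q = {a}" "a = POut"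
    using post_single[OF or] q by blast
  then show ?case by (auto simp: reach_def)
next
  case (step x y)
  have pn: "petri_net N" using or by (simp add: tOR_def tWF_def)
  from step(1) show ?case
  proof (auto simp: flow_def)
    fix p t assume pt: "(p, t) \<in> pre N" and xy: "x = Inl p" "y = Inr t"
    have t: "t \<in> trans N" using pn pt by (auto simp: petri_net_def)
    obtain a where a: "preset (pc N Inp Out) t = {a}" "a = Orig p"
      using pre_single[OF or t] pt by blast
    obtain b where b: "postset (pc N Inp Out) t = {b}"
      using post_single[OF or t] by blast
    have "reach (pc N Inp Out) {#b#} {#POut#}" using step(3) xy t b by simp
    then show "reach (pc N Inp Out) {#Orig p#} {#POut#}"
      using fire_single[of t "pc N Inp Out" a b] a b t by (auto intro: reach_step)
  next
    fix t p b assume tp: "(t, p) \<in> post N" and xy: "x = Inr t" "y = Inl p"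
      and b: "postset (pc N Inp Out) t = {b}"
    have t: "t \<in> trans N" using pn tp by (auto simp: petri_net_def)
    obtain a where "postset (pc N Inp Out) t = {a}" "a = Orig p"
      using post_single[OF or t] tp by blast
    with b have "b = Orig p" by simp
    then show "reach (pc N Inp Out) {#b#} {#POut#}" using step(3) xy by simp
  qed
qed

lemma token_reach:
  assumes or: "tOR N Inp Out" and x: "x \<in> places (pc N Inp Out)"
  shows "reach (pc N Inp Out) {#x#} {#POut#}"
proof -
  have tw: "tWF N Inp Out" using or by (simp add: tOR_def)
  have wc: "wf_connected N (Inr ` Inp) (Inr ` Out)" using tw by (simp add: tWF_def)
  have trans_ok: "reach (pc N Inp Out) {#b#} {#POut#}"
    if t: "t \<in> trans N" and b: "postset (pc N Inp Out) t = {b}" for t b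
  proof -
    have "Inr t \<in> nodes N" using t by (simp add: nodes_def)
    then obtain q where "q \<in> Out" "(Inr t, Inr q) \<in> (flow N)\<^sup>*"
      using wc unfolding wf_connected_def by blast
    from path_reach[OF or this(2) this(1)] show ?thesis using t b by simp
  qed
  show ?thesis
  proof (cases x)
    case (Orig p)
    then have "p \<in> places N" using x by (auto simp: pc_places)
    then have "Inl p \<in> nodes N" by (simp add: nodes_def)
    then obtain q where "q \<in> Out" "(Inl p, Inr q) \<in> (flow N)\<^sup>*"
      using wc unfolding wf_connected_def by blast
    from path_reach[OF or this(2) this(1)] show ?thesis using Orig by simp
  next
    case PIn
    obtain t where t: "t \<in> Inp" using tw by (auto simp: tWF_def)
    then have tt: "t \<in> trans N" using tw by (auto simp: tWF_def)
    obtain a where a: "preset (pc N Inp Out) t = {a}" "a = PIn"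
      using pre_single[OF or tt] t by blast
    obtain b where b: "postset (pc N Inp Out) t = {b}"
      using post_single[OF or tt] by blast
    show ?thesis using PIn fire_single[of t "pc N Inp Out" a b] a b tt trans_ok[OF tt b]
      by (auto intro: reach_step)
  next
    case POut
    then show ?thesis by (simp add: reach_def)
  qed
qed

lemma all_reach:
  assumes or: "tOR N Inp Out"
  shows "set_mset m \<subseteq> places (pc N Inp Out) \<Longrightarrow>
    reach (pc N Inp Out) m (repeat_mset (size m) {#POut#})"
proof (induction m)
  case empty
  then show ?case by (simp add: reach_def)
next
  case (add x m)
  then have m: "reach (pc N Inp Out) m (repeat_mset (size m) {#POut#})" by simp
  have x: "reach (pc N Inp Out) {#x#} {#POut#}" using add token_reach[OF or] by simp
  have 1: "reach (pc N Inp Out) (add_mset x m) (repeat_mset (size m) {#POut#} + {#x#})"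
    using reach_add[OF m, of "{#x#}"] by simp
  have 2: "reach (pc N Inp Out) ({#x#} + repeat_mset (size m) {#POut#})
      ({#POut#} + repeat_mset (size m) {#POut#})"
    using reach_add[OF x] by blast
  show ?case using reach_trans[OF 1] 2 by (simp add: add.commute)
qed

theorem mainTheorem17:
  fixes N :: "('p, 't) pnet" and Inp Out :: "'t set"
  assumes "tOR N Inp Out"
  shows "sub_sound_t N Inp Out"
  unfolding sub_sound_t_def sub_sound_p_def
proof (intro allI impI)
  fix k k' :: nat and m' :: "'p cplace multiset"
  assume kk: "k' \<le> k" and pl: "set_mset m' \<subseteq> places (pc N Inp Out)"
    and r: "reach (pc N Inp Out) (repeat_mset k (mset_set {PIn})) (m' + repeat_mset k' (mset_set {POut}))"
  have "size m' = k - k'" using reach_size[OF assms r] by (simp add: size_repeat_mset)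
  then show "reach (pc N Inp Out) m' (repeat_mset (k - k') (mset_set {POut}))"
    using all_reach[OF assms pl] by simp
qed

end
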